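(* Let either $t_i=i+\beta$ for $i\ge1$ with $\beta>-1$, and set $\rho(u)=\log u$; or $t_i=i^\alpha$ for $i\ge1$ with $0<\alpha<1$, and set $\rho(u)=u^{1/\alpha-1}$. Let $n(t)=\#\{k\ge1: t_k\le t\}$. There are constants $C>0$ and $D$, depending only on $\alpha$ or $\beta$, such that for all sufficiently large $M$, \[ u^3\int_0^{t_M}\frac{n(t)}{t^2(t^2+u^2+ut\sqrt2)}\,dt\ge C\,u\,\rho(\min(t_M,u)) \] whenever $u\ge D$. *)

theory Defs
  imports "HOL-Analysis.Analysis"
begin

definition count_le :: "(nat \<Rightarrow> real) \<Rightarrow> real \<Rightarrow> nat" where
  "count_le t x = card {k::nat. k \<ge> 1 \<and> t k \<le> x}"

end

theory Submission
  imports Defs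
begin

lemma key:
  fixes t :: "nat \<Rightarrow> real" and u :: real and M K :: nat
  assumes pos: "\<And>k. k \<ge> 1 \<Longrightarrow> t k > 0"
    and smono: "\<And>i j. 1 \<le> i \<Longrightarrow> i < j \<Longrightarrow> t i < t j"
    and u: "u > 0" and M1: "1 \<le> M" and KM: "K \<le> M"
    and Kb: "\<And>k. 1 \<le> k \<Longrightarrow> k \<le> K \<Longrightarrow> 2 * t k \<le> min (t M) u"
  shows "u ^ 3 * integral {0..t M}
             (\<lambda>x. real (count_le t x) / (x\<^sup>2 * (x\<^sup>2 + u\<^sup>2 + u * x * sqrt 2)))
         \<ge> u / 16 * (\<Sum>k=1..K. 1 / t k)"
proof -
  define g where "g x = 1 / (x\<^sup>2 * (x\<^sup>2 + u\<^sup>2 + u * x * sqrt 2))" for x :: real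
  have denp: "x\<^sup>2 + u\<^sup>2 + u * x * sqrt 2 > 0" if "x > 0" for x
    using that u by (simp add: add_pos_pos)
  have gnn: "g x \<ge> 0" if "x > 0" for x
    using denp[OF that] that by (simp add: g_def)
  have cont: "continuous_on {a..b} g" if "a > 0" for a b
  proof -
    have nz: "x\<^sup>2 * (x\<^sup>2 + u\<^sup>2 + u * x * sqrt 2) \<noteq> 0" if "x \<in> {a..b}" for x
    proof -
      have x0: "x > 0" using that \<open>a > 0\<close> by simp
      have "x\<^sup>2 * (x\<^sup>2 + u\<^sup>2 + u * x * sqrt 2) > 0"
        using x0 denp[OF x0] by simp
      then show ?thesis by linarith
    qed
    show ?thesis unfolding g_def
      by (intro continuous_intros ballI nz)
  qed
  have gint: "g integrable_on {a..b}" if "a > 0" for a b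
    using cont[OF that] integrable_continuous_interval by blast
  have cnt: "real (count_le t x) = (\<Sum>k=1..M. if t k \<le> x then 1 else 0)" if "x \<le> t M" for x
  proof -
    have "{k. k \<ge> 1 \<and> t k \<le> x} = {k\<in>{1..M}. t k \<le> x}"
    proof (safe)
      fix k assume k: "1 \<le> k" "t k \<le> x"
      show "k \<in> {1..M}"
      proof (rule ccontr)
        assume "k \<notin> {1..M}"
        then have "M < k" using k by auto
        then have "t M < t k" using smono M1 by blast
        then show False using k that by linarith
      qed
    qed auto
    then have "count_le t x = card {k\<in>{1..M}. t k \<le> x}" by (simp add: count_le_def)
    also have "\<dots> = (\<Sum>k\<in>{k\<in>{1..M}. t k \<le> x}. 1)" by simp
    also have "\<dots> = (\<Sum>k=1..M. if t k \<le> x then 1 else 0)"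
      by (subst sum.inter_filter) auto
    finally show ?thesis by (auto simp: of_nat_sum intro!: sum.cong)
  qed
  have eq: "real (count_le t x) / (x\<^sup>2 * (x\<^sup>2 + u\<^sup>2 + u * x * sqrt 2))
      = (\<Sum>k=1..M. if x \<in> {t k..t M} then g x else 0)" if "x \<in> {0..t M}" for x
  proof -
    have "real (count_le t x) / (x\<^sup>2 * (x\<^sup>2 + u\<^sup>2 + u * x * sqrt 2)) = real (count_le t x) * g x"
      by (simp add: g_def)
    also have "\<dots> = (\<Sum>k=1..M. (if t k \<le> x then 1 else 0) * g x)"
      using that by (simp add: cnt sum_distrib_right)
    also have "\<dots> = (\<Sum>k=1..M. if x \<in> {t k..t M} then g x else 0)"
      using that by (intro sum.cong) auto
    finally show ?thesis .
  qed
  have hk: "((\<lambda>x. if x \<in> {t k..t M} then g x else 0) has_integral integral {t k..t M} g) {0..t M}"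
    if "k \<in> {1..M}" for k
  proof -
    have "{t k..t M} \<subseteq> {0..t M}" using pos[of k] that by auto
    moreover have "(g has_integral integral {t k..t M} g) {t k..t M}"
      using gint pos[of k] that by auto
    ultimately show ?thesis by (simp only: has_integral_restrict)
  qed
  have "((\<lambda>x. \<Sum>k=1..M. if x \<in> {t k..t M} then g x else 0) has_integral
          (\<Sum>k=1..M. integral {t k..t M} g)) {0..t M}"
    by (rule has_integral_sum) (use hk in auto)
  then have I: "integral {0..t M}
             (\<lambda>x. real (count_le t x) / (x\<^sup>2 * (x\<^sup>2 + u\<^sup>2 + u * x * sqrt 2)))
       = (\<Sum>k=1..M. integral {t k..t M} g)"
    by (subst integral_cong[OF eq]) (auto intro: integral_unique)
  have Inn: "integral {t k..t M} g \<ge> 0" if "k \<in> {1..M}" for k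
    using that pos[of k] by (intro integral_nonneg gint) (auto intro!: gnn)
  have Ilow: "integral {t k..t M} g \<ge> 1 / (16 * t k * u\<^sup>2)" if "k \<in> {1..K}" for k
  proof -
    have k1: "k \<ge> 1" "k \<le> K" using that by auto
    define a where "a = t k"
    have a: "a > 0" "2 * a \<le> t M" "2 * a \<le> u" using Kb[OF k1] pos[OF k1(1)] by (auto simp: a_def)
    have lb: "1 / (16 * a\<^sup>2 * u\<^sup>2) \<le> g x" if "x \<in> {a..2*a}" for x
    proof -
      have x: "a \<le> x" "x \<le> 2 * a" using that by auto
      have x0: "x > 0" using x a by linarith
      have "x\<^sup>2 \<le> (2*a)\<^sup>2" using x x0 by (intro power_mono) auto
      have xu: "x \<le> u" using x a by linarith
      have "x\<^sup>2 \<le> u\<^sup>2" using xu x0 by (intro power_mono) auto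
      moreover have "u * x * sqrt 2 \<le> u * u * 2"
      proof -
        have "sqrt 2 \<le> 2" by (simp add: real_sqrt_le_iff' )
        then show ?thesis using xu x0 u
          by (intro mult_mono) auto
      qed
      ultimately have d: "x\<^sup>2 + u\<^sup>2 + u * x * sqrt 2 \<le> 4 * u\<^sup>2" by (simp add: power2_eq_square)
      have "x\<^sup>2 * (x\<^sup>2 + u\<^sup>2 + u * x * sqrt 2) \<le> (2*a)\<^sup>2 * (4 * u\<^sup>2)"
        using \<open>x\<^sup>2 \<le> (2*a)\<^sup>2\<close> d denp[OF x0] by (intro mult_mono) auto
      also have "\<dots> = 16 * a\<^sup>2 * u\<^sup>2" by (simp add: power2_eq_square)
      finally have "x\<^sup>2 * (x\<^sup>2 + u\<^sup>2 + u * x * sqrt 2) \<le> 16 * a\<^sup>2 * u\<^sup>2" .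
      moreover have "x\<^sup>2 * (x\<^sup>2 + u\<^sup>2 + u * x * sqrt 2) > 0" using x0 denp[OF x0] by simp
      ultimately show ?thesis unfolding g_def by (intro divide_left_mono) auto
    qed
    have "1 / (16 * a * u\<^sup>2) = integral {a..2*a} (\<lambda>x. 1 / (16 * a\<^sup>2 * u\<^sup>2))"
      using a by (simp add: power2_eq_square field_simps)
    also have "\<dots> \<le> integral {a..2*a} g"
      using a lb by (intro integral_le gint) auto
    also have "\<dots> \<le> integral {a..t M} g"
      using a by (intro integral_subset_le gint) (auto intro!: gnn)
    finally show ?thesis by (simp add: a_def)
  qed
  have "(\<Sum>k=1..K. 1 / (16 * t k * u\<^sup>2)) \<le> (\<Sum>k=1..K. integral {t k..t M} g)"
    by (intro sum_mono Ilow)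
  also have "\<dots> \<le> (\<Sum>k=1..M. integral {t k..t M} g)"
    using KM by (intro sum_mono2 Inn) auto
  finally have S: "(\<Sum>k=1..K. 1 / (16 * t k * u\<^sup>2)) \<le> (\<Sum>k=1..M. integral {t k..t M} g)" .
  have "u / 16 * (\<Sum>k=1..K. 1 / t k) = u ^ 3 * (\<Sum>k=1..K. 1 / (16 * t k * u\<^sup>2))"
    using u by (simp add: sum_distrib_left power2_eq_square power3_eq_cube field_simps)
  also have "\<dots> \<le> u ^ 3 * (\<Sum>k=1..M. integral {t k..t M} g)"
    using S u by (intro mult_left_mono) auto
  finally show ?thesis using I by simp
qed

lemma sum_beta:
  fixes \<beta> m :: real
  assumes b: "\<beta> > -1" and m16: "m \<ge> 16" and mb: "m \<ge> 4 * \<bar>\<beta>\<bar>"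
  shows "(\<Sum>k=1..nat \<lfloor>m/2 - \<beta>\<rfloor>. 1 / (real k + \<beta>)) \<ge> ln m / (2 * (1 + \<bar>\<beta>\<bar>))"
proof -
  define K where "K = nat \<lfloor>m/2 - \<beta>\<rfloor>"
  have pos: "m/2 - \<beta> \<ge> m/4" using mb by (cases "\<beta> \<ge> 0") auto
  have K1: "real K + 1 \<ge> m/2 - \<beta>"
  proof -
    have "\<lfloor>m/2 - \<beta>\<rfloor> \<ge> 0" using pos m16 by simp
    then have "real K = of_int \<lfloor>m/2 - \<beta>\<rfloor>" by (simp add: K_def)
    then show ?thesis by linarith
  qed
  have tl: "1 / ((1 + \<bar>\<beta>\<bar>) * real k) \<le> 1 / (real k + \<beta>)" if "k \<in> {1..K}" for k
  proof -
    have k1: "real k \<ge> 1" using that by auto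
    have "real k + \<beta> > 0" using k1 b by linarith
    moreover have "real k + \<beta> \<le> (1 + \<bar>\<beta>\<bar>) * real k"
    proof -
      have "\<bar>\<beta>\<bar> * 1 \<le> \<bar>\<beta>\<bar> * real k" using k1 by (intro mult_left_mono) auto
      then have "\<beta> \<le> \<bar>\<beta>\<bar> * real k" by linarith
      then show ?thesis by (simp add: algebra_simps)
    qed
    ultimately show ?thesis by (intro divide_left_mono) auto
  qed
  have "(\<Sum>k=1..K. 1 / ((1 + \<bar>\<beta>\<bar>) * real k)) = harm K / (1 + \<bar>\<beta>\<bar>)"
    unfolding harm_def sum_divide_distrib by (intro sum.cong) (auto simp: field_simps)
  also have "\<dots> \<ge> ln (real K + 1) / (1 + \<bar>\<beta>\<bar>)"
    by (intro divide_right_mono ln_le_harm) auto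
  finally have s1: "(\<Sum>k=1..K. 1 / (real k + \<beta>)) \<ge> ln (real K + 1) / (1 + \<bar>\<beta>\<bar>)"
    using sum_mono[of "{1..K}" "\<lambda>k. 1 / ((1 + \<bar>\<beta>\<bar>) * real k)" "\<lambda>k. 1 / (real k + \<beta>)"] tl by force
  have "ln (real K + 1) \<ge> ln (m/4)"
    using K1 pos m16 by (subst ln_le_cancel_iff) auto
  also have "ln (m/4) = ln m - ln 4" using m16 by (simp add: ln_div)
  finally have l1: "ln (real K + 1) \<ge> ln m - ln 4" .
  have "2 * ln 4 = ln ((4::real)^2)" using ln_realpow[of "4::real" 2] by simp
  also have "\<dots> \<le> ln m" using m16 by (subst ln_le_cancel_iff) auto
  finally have "ln (real K + 1) \<ge> ln m / 2" using l1 by linarith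
  then have l2: "ln (real K + 1) / (1 + \<bar>\<beta>\<bar>) \<ge> (ln m / 2) / (1 + \<bar>\<beta>\<bar>)"
    by (intro divide_right_mono) auto
  have "ln m / (2 * (1 + \<bar>\<beta>\<bar>)) = (ln m / 2) / (1 + \<bar>\<beta>\<bar>)" by simp
  also have "\<dots> \<le> ln (real K + 1) / (1 + \<bar>\<beta>\<bar>)" by (rule l2)
  also have "\<dots> \<le> (\<Sum>k=1..K. 1 / (real k + \<beta>))" by (rule s1)
  finally show ?thesis unfolding K_def .
qed

lemma sum_alpha:
  fixes \<alpha> m :: real
  assumes a: "0 < \<alpha>" "\<alpha> < 1" and m4: "m \<ge> 4"
  shows "(\<Sum>k=1..nat \<lfloor>(m/2) powr (1/\<alpha>)\<rfloor>. 1 / (real k powr \<alpha>))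
     \<ge> m powr (1/\<alpha> - 1) / (2 * 2 powr (1/\<alpha> - 1))"
proof -
  define e where "e = 1/\<alpha> - 1"
  define y where "y = (m/2) powr (1/\<alpha>)"
  define K where "K = nat \<lfloor>y\<rfloor>"
  have ia: "1/\<alpha> \<ge> 1" using a by simp
  have "(m/2) powr 1 \<le> y" unfolding y_def using ia m4 by (intro powr_mono) auto
  then have y2: "y \<ge> 2" using m4 by simp
  have Ky: "real K \<le> y" "real K \<ge> y - 1" using y2 unfolding K_def by linarith+
  have K1: "real K \<ge> 1" "real K \<ge> y / 2" using Ky y2 by linarith+
  have tl: "1 / (real K powr \<alpha>) \<le> 1 / (real k powr \<alpha>)" if "k \<in> {1..K}" for k
  proof -
    have "real k \<ge> 1" "real k \<le> real K" using that by auto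
    then have "real k powr \<alpha> \<le> real K powr \<alpha>" "real k powr \<alpha> > 0"
      using a by (auto intro!: powr_mono2)
    then show ?thesis by (intro frac_le) auto
  qed
  have "(\<Sum>k=1..K. 1 / (real K powr \<alpha>)) = real K powr (1 - \<alpha>)"
    using K1 by (simp add: powr_diff)
  then have s1: "(\<Sum>k=1..K. 1 / (real k powr \<alpha>)) \<ge> real K powr (1 - \<alpha>)"
    using sum_mono[of "{1..K}" "\<lambda>k. 1 / (real K powr \<alpha>)" "\<lambda>k. 1 / (real k powr \<alpha>)"] tl by force
  have "real K powr (1 - \<alpha>) \<ge> (y/2) powr (1 - \<alpha>)"
    using K1 y2 a by (intro powr_mono2) auto
  also have "(y/2) powr (1 - \<alpha>) = y powr (1 - \<alpha>) / 2 powr (1 - \<alpha>)"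
    using y2 by (simp add: powr_divide)
  also have "\<dots> \<ge> y powr (1 - \<alpha>) / 2"
  proof -
    have "2 powr (1 - \<alpha>) \<le> 2 powr 1" using a by (intro powr_mono) auto
    then show ?thesis by (intro divide_left_mono) auto
  qed
  finally have s2: "real K powr (1 - \<alpha>) \<ge> y powr (1 - \<alpha>) / 2" .
  have "y powr (1 - \<alpha>) = (m/2) powr (1/\<alpha> * (1 - \<alpha>))" unfolding y_def by (simp add: powr_powr)
  also have "1/\<alpha> * (1 - \<alpha>) = e" unfolding e_def using a by (simp add: field_simps)
  also have "(m/2) powr e = m powr e / 2 powr e" using m4 by (simp add: powr_divide)
  finally have "y powr (1 - \<alpha>) = m powr e / 2 powr e" .
  moreover have "(m powr e / 2 powr e) / 2 = m powr e / (2 * 2 powr e)" by simp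
  ultimately have "(\<Sum>k=1..K. 1 / (real k powr \<alpha>)) \<ge> m powr e / (2 * 2 powr e)"
    using s1 s2 by linarith
  then show ?thesis unfolding K_def y_def e_def .
qed


lemma floor_real_nat:
  fixes x :: real assumes "x \<ge> 0"
  shows "real (nat \<lfloor>x\<rfloor>) \<le> x" "real (nat \<lfloor>x\<rfloor>) > x - 1"
proof -
  have "\<lfloor>x\<rfloor> \<ge> 0" using assms by simp
  then have "real (nat \<lfloor>x\<rfloor>) = of_int \<lfloor>x\<rfloor>" by simp
  then show "real (nat \<lfloor>x\<rfloor>) \<le> x" "real (nat \<lfloor>x\<rfloor>) > x - 1" by linarith+
qed

theorem lemma2p1:
  fixes t :: "nat \<Rightarrow> real" and \<rho> :: "real \<Rightarrow> real" and \<alpha> \<beta> :: real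
  assumes "(\<beta> > -1 \<and> (\<forall>i\<ge>1. t i = real i + \<beta>) \<and> \<rho> = ln)
         \<or> (0 < \<alpha> \<and> \<alpha> < 1 \<and> (\<forall>i\<ge>1. t i = real i powr \<alpha>) \<and> \<rho> = (\<lambda>u. u powr (1 / \<alpha> - 1)))"
  shows "\<exists>C>0. \<exists>D. \<exists>M0. \<forall>M\<ge>M0. \<forall>u\<ge>D.
           u ^ 3 * integral {0..t M}
             (\<lambda>x. real (count_le t x) / (x\<^sup>2 * (x\<^sup>2 + u\<^sup>2 + u * x * sqrt 2)))
           \<ge> C * u * \<rho> (min (t M) u)"
  using assms
proof (elim disjE conjE)
  assume b: "\<beta> > -1" and ht: "\<forall>i\<ge>1. t i = real i + \<beta>" and rho: "\<rho> = ln"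
  define D where "D = max 16 (4 * \<bar>\<beta>\<bar>)"
  define C where "C = 1 / (32 * (1 + \<bar>\<beta>\<bar>))"
  define M0 where "M0 = nat \<lceil>D + \<bar>\<beta>\<bar>\<rceil> + 1"
  have "\<forall>M\<ge>M0. \<forall>u\<ge>D.
           u ^ 3 * integral {0..t M}
             (\<lambda>x. real (count_le t x) / (x\<^sup>2 * (x\<^sup>2 + u\<^sup>2 + u * x * sqrt 2)))
           \<ge> C * u * \<rho> (min (t M) u)"
  proof (intro allI impI)
    fix M :: nat and u :: real
    assume M: "M \<ge> M0" and uD: "u \<ge> D"
    have M1: "M \<ge> 1" using M unfolding M0_def by simp
    have "real M \<ge> D + \<bar>\<beta>\<bar> + 1" using M unfolding M0_def by linarith
    then have tM: "t M \<ge> D" using ht M1 by auto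
    define m where "m = min (t M) u"
    have m: "m \<ge> 16" "m \<ge> 4 * \<bar>\<beta>\<bar>" "m \<le> t M" "m \<le> u" using tM uD unfolding m_def D_def by auto
    have u0: "u > 0" using m by linarith
    have mb: "m/2 - \<beta> \<ge> 0" using m by (cases "\<beta> \<ge> 0") auto
    define K where "K = nat \<lfloor>m/2 - \<beta>\<rfloor>"
    have RK: "real K \<le> m/2 - \<beta>" unfolding K_def using floor_real_nat[OF mb] by simp
    have pos: "\<And>k. k \<ge> 1 \<Longrightarrow> t k > 0" using ht b by auto
    have smono: "\<And>i j. 1 \<le> i \<Longrightarrow> i < j \<Longrightarrow> t i < t j" using ht by auto
    have KM: "K \<le> M"
    proof -
      have "real K \<le> real M" using RK m ht M1 by auto
      then show ?thesis by simp
    qed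
    have Kb: "\<And>k. 1 \<le> k \<Longrightarrow> k \<le> K \<Longrightarrow> 2 * t k \<le> min (t M) u"
    proof -
      fix k :: nat assume "1 \<le> k" "k \<le> K"
      then have "real k \<le> real K" "t k = real k + \<beta>" using ht by auto
      then show "2 * t k \<le> min (t M) u" using RK unfolding m_def[symmetric] by linarith
    qed
    have kk: "u ^ 3 * integral {0..t M}
             (\<lambda>x. real (count_le t x) / (x\<^sup>2 * (x\<^sup>2 + u\<^sup>2 + u * x * sqrt 2)))
         \<ge> u / 16 * (\<Sum>k=1..K. 1 / t k)"
      by (rule key[of t u M K, OF pos smono u0 M1 KM Kb])
    have "(\<Sum>k=1..K. 1 / t k) = (\<Sum>k=1..K. 1 / (real k + \<beta>))"
      using ht by (intro sum.cong) auto
    also have "\<dots> \<ge> ln m / (2 * (1 + \<bar>\<beta>\<bar>))"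
      unfolding K_def by (rule sum_beta[OF b m(1) m(2)])
    finally have s: "(\<Sum>k=1..K. 1 / t k) \<ge> ln m / (2 * (1 + \<bar>\<beta>\<bar>))" .
    have "C * u * \<rho> (min (t M) u) = u / 16 * (ln m / (2 * (1 + \<bar>\<beta>\<bar>)))"
      unfolding C_def rho m_def by simp
    also have "\<dots> \<le> u / 16 * (\<Sum>k=1..K. 1 / t k)"
      using s u0 by (intro mult_left_mono) auto
    finally show "u ^ 3 * integral {0..t M}
             (\<lambda>x. real (count_le t x) / (x\<^sup>2 * (x\<^sup>2 + u\<^sup>2 + u * x * sqrt 2)))
           \<ge> C * u * \<rho> (min (t M) u)" using kk by linarith
  qed
  moreover have "C > 0" unfolding C_def by (simp add: add_pos_nonneg)
  ultimately show ?thesis by blast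
next
  assume a0: "0 < \<alpha>" and a1: "\<alpha> < 1" and ht: "\<forall>i\<ge>1. t i = real i powr \<alpha>"
    and rho: "\<rho> = (\<lambda>u. u powr (1 / \<alpha> - 1))"
  define e where "e = 1 / \<alpha> - 1"
  define D :: real where "D = 4"
  define C where "C = 1 / (32 * 2 powr e)"
  define M0 where "M0 = max 1 (nat \<lceil>4 powr (1/\<alpha>)\<rceil>)"
  have pp: "(x powr (1/\<alpha>)) powr \<alpha> = x" if "x \<ge> 0" for x :: real
    using a0 that by (simp add: powr_powr)
  have pp2: "(x powr \<alpha>) powr (1/\<alpha>) = x" if "x \<ge> 0" for x :: real
    using a0 that by (simp add: powr_powr)
  have "\<forall>M\<ge>M0. \<forall>u\<ge>D.
           u ^ 3 * integral {0..t M}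
             (\<lambda>x. real (count_le t x) / (x\<^sup>2 * (x\<^sup>2 + u\<^sup>2 + u * x * sqrt 2)))
           \<ge> C * u * \<rho> (min (t M) u)"
  proof (intro allI impI)
    fix M :: nat and u :: real
    assume M: "M \<ge> M0" and uD: "u \<ge> D"
    have M1: "M \<ge> 1" using M unfolding M0_def by simp
    have "real M \<ge> 4 powr (1/\<alpha>)" using M unfolding M0_def by linarith
    then have "real M powr \<alpha> \<ge> (4 powr (1/\<alpha>)) powr \<alpha>"
      using a0 by (intro powr_mono2) auto
    then have tM: "t M \<ge> 4" using ht M1 pp[of 4] by auto
    define m where "m = min (t M) u"
    have m: "m \<ge> 4" "m \<le> t M" "m \<le> u" using tM uD unfolding m_def D_def by auto
    have u0: "u > 0" using m by linarith
    define y where "y = (m/2) powr (1/\<alpha>)"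
    have y0: "y \<ge> 0" unfolding y_def by simp
    define K where "K = nat \<lfloor>y\<rfloor>"
    have RK: "real K \<le> y" unfolding K_def using floor_real_nat[OF y0] by simp
    have pos: "\<And>k. k \<ge> 1 \<Longrightarrow> t k > 0" using ht by auto
    have smono: "\<And>i j. 1 \<le> i \<Longrightarrow> i < j \<Longrightarrow> t i < t j"
      using ht a0 by (auto intro!: powr_less_mono2)
    have KM: "K \<le> M"
    proof -
      have "y \<le> (t M) powr (1/\<alpha>)" unfolding y_def using m a0 by (intro powr_mono2) auto
      also have "\<dots> = real M" using ht M1 pp2 by auto
      finally have "real K \<le> real M" using RK by linarith
      then show ?thesis by simp
    qed
    have Kb: "\<And>k. 1 \<le> k \<Longrightarrow> k \<le> K \<Longrightarrow> 2 * t k \<le> min (t M) u"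
    proof -
      fix k :: nat assume "1 \<le> k" "k \<le> K"
      then have "real k \<le> y" "t k = real k powr \<alpha>" using ht RK by auto
      then have "t k \<le> y powr \<alpha>" using a0 by (auto intro!: powr_mono2)
      also have "y powr \<alpha> = m / 2" unfolding y_def using m by (intro pp) auto
      finally show "2 * t k \<le> min (t M) u" unfolding m_def[symmetric] by linarith
    qed
    have kk: "u ^ 3 * integral {0..t M}
             (\<lambda>x. real (count_le t x) / (x\<^sup>2 * (x\<^sup>2 + u\<^sup>2 + u * x * sqrt 2)))
         \<ge> u / 16 * (\<Sum>k=1..K. 1 / t k)"
      by (rule key[of t u M K, OF pos smono u0 M1 KM Kb])
    have "(\<Sum>k=1..K. 1 / t k) = (\<Sum>k=1..K. 1 / (real k powr \<alpha>))"
      using ht by (intro sum.cong) auto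
    also have "\<dots> \<ge> m powr (1/\<alpha> - 1) / (2 * 2 powr (1/\<alpha> - 1))"
      unfolding K_def y_def by (rule sum_alpha[OF a0 a1 m(1)])
    finally have s: "(\<Sum>k=1..K. 1 / t k) \<ge> m powr e / (2 * 2 powr e)" unfolding e_def .
    have "C * u * \<rho> (min (t M) u) = u / 16 * (m powr e / (2 * 2 powr e))"
      unfolding C_def rho m_def e_def by simp
    also have "\<dots> \<le> u / 16 * (\<Sum>k=1..K. 1 / t k)"
      using s u0 by (intro mult_left_mono) auto
    finally show "u ^ 3 * integral {0..t M}
             (\<lambda>x. real (count_le t x) / (x\<^sup>2 * (x\<^sup>2 + u\<^sup>2 + u * x * sqrt 2)))
           \<ge> C * u * \<rho> (min (t M) u)" using kk by linarith
  qed
  moreover have "C > 0" unfolding C_def by simp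
  ultimately show ?thesis by blast
qed

end
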